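(* Let $(W,S)$ be a finitely generated Coxeter system, ordered by the partial order $\le$ defined in the context. (1) The poset $(W,\le)$ is graded with rank function $w\mapsto |S(w)|$; that is, $e$ is the unique minimal element, $|S(e)|=0$, and whenever $v$ covers $u$ in $(W,\le)$ one has $|S(v)|=|S(u)|+1$. (2) For any $u\le v$ in $W$, the interval $[u,v]=\{w\in W: u\le w\le v\}$ is an upper semimodular lattice.
   Context: $(W,S)$ is a finitely generated Coxeter system with length function $\ell$ and identity $e$. For $w\in W$, $S(w)\subseteq S$ is the set of simple reflections appearing in a (any) reduced expression of $w$ (this does not depend on the reduced expression); the connectivity set is $C(w)=S\setminus S(w)$. The descent set is $\mathrm{Des}(w)=\{s\in S:\ell(ws)<\ell(w)\}$. For $I\subseteq S$, $W_I$ is the parabolic subgroup generated by $I$, and $X_I=\{u\in W:\ell(us)>\ell(u)\ \forall s\in I\}$ is the set of minimal length coset representatives of $W/W_I$; every $w\in W$ has a unique factorization $w=w^Iw_I$ with $w^I\in X_I$, $w_I\in W_I$ (the parabolic components of $w$ along $I$), and $\ell(w)=\ell(w^I)+\ell(w_I)$. The partial order on $W$: $u\le v$ if and only if $v_{S(u)}=u$. A cover of $u$ is an element $v>u$ with $[u,v]=\{u,v\}$. A lattice $L$ is upper semimodular if whenever $g,h\in L$ both cover $w\in L$, there is $x\in L$ covering both $g$ and $h$. *)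

theory Defs
  imports "HOL-Algebra.Group" "HOL-Library.Extended_Nat"
begin

definition wprod :: "('a, 'b) monoid_scheme \<Rightarrow> 'a list \<Rightarrow> 'a" where
  "wprod G xs = foldr (\<lambda>x y. x \<otimes>\<^bsub>G\<^esub> y) xs \<one>\<^bsub>G\<^esub>"

definition coxeter_matrix :: "'a set \<Rightarrow> ('a \<Rightarrow> 'a \<Rightarrow> enat) \<Rightarrow> bool" where
  "coxeter_matrix S m \<longleftrightarrow>
     (\<forall>s\<in>S. m s s = 1) \<and> (\<forall>s\<in>S. \<forall>t\<in>S. m s t = m t s) \<and>
     (\<forall>s\<in>S. \<forall>t\<in>S. s \<noteq> t \<longrightarrow> m s t \<ge> 2)"

definition relators :: "'a set \<Rightarrow> ('a \<Rightarrow> 'a \<Rightarrow> enat) \<Rightarrow> 'a list set" where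
  "relators S m = {concat (replicate k [s, t]) | s t k. s \<in> S \<and> t \<in> S \<and> m s t = enat k}"

definition cox_step :: "'a set \<Rightarrow> ('a \<Rightarrow> 'a \<Rightarrow> enat) \<Rightarrow> ('a list \<times> 'a list) set" where
  "cox_step S m = {(xs @ r @ ys, xs @ ys) | xs ys r. xs \<in> lists S \<and> ys \<in> lists S \<and> r \<in> relators S m}"

text \<open>(G,S) is a finitely generated Coxeter system: S is a finite generating set of the group G
  and a word over S is trivial in G iff it is trivial in the presentation
  <S | (st)^m(s,t) = 1>, i.e. G is presented by the Coxeter presentation.\<close>
definition coxeter_system :: "('a, 'b) monoid_scheme \<Rightarrow> 'a set \<Rightarrow> bool" where
  "coxeter_system G S \<longleftrightarrow> group G \<and> finite S \<and> S \<subseteq> carrier G \<and> \<one>\<^bsub>G\<^esub> \<notin> S \<and>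
     carrier G = wprod G ` lists S \<and>
     (\<exists>m. coxeter_matrix S m \<and>
        (\<forall>xs\<in>lists S. wprod G xs = \<one>\<^bsub>G\<^esub> \<longleftrightarrow> (xs, []) \<in> (cox_step S m \<union> (cox_step S m)\<inverse>)\<^sup>*))"

definition cox_len :: "('a, 'b) monoid_scheme \<Rightarrow> 'a set \<Rightarrow> 'a \<Rightarrow> nat" where
  "cox_len G S w = (LEAST n. \<exists>xs\<in>lists S. length xs = n \<and> wprod G xs = w)"

definition reduced_word :: "('a, 'b) monoid_scheme \<Rightarrow> 'a set \<Rightarrow> 'a list \<Rightarrow> 'a \<Rightarrow> bool" where
  "reduced_word G S xs w \<longleftrightarrow> xs \<in> lists S \<and> wprod G xs = w \<and> length xs = cox_len G S w"

text \<open>S(w): the simple reflections occurring in a reduced expression of w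
  (independent of the reduced expression).\<close>
definition supp :: "('a, 'b) monoid_scheme \<Rightarrow> 'a set \<Rightarrow> 'a \<Rightarrow> 'a set" where
  "supp G S w = \<Union>{set xs | xs. reduced_word G S xs w}"

definition par_sub :: "('a, 'b) monoid_scheme \<Rightarrow> 'a set \<Rightarrow> 'a set" where
  "par_sub G I = wprod G ` lists I"

definition min_reps :: "('a, 'b) monoid_scheme \<Rightarrow> 'a set \<Rightarrow> 'a set \<Rightarrow> 'a set" where
  "min_reps G S I = {u \<in> carrier G. \<forall>s\<in>I. cox_len G S (u \<otimes>\<^bsub>G\<^esub> s) > cox_len G S u}"

text \<open>w_I: the unique v in W_I with w = w^I v, w^I in X_I.\<close>
definition par_comp :: "('a, 'b) monoid_scheme \<Rightarrow> 'a set \<Rightarrow> 'a set \<Rightarrow> 'a \<Rightarrow> 'a" where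
  "par_comp G S I w = (THE v. v \<in> par_sub G I \<and> w \<otimes>\<^bsub>G\<^esub> inv\<^bsub>G\<^esub> v \<in> min_reps G S I)"

definition cox_le :: "('a, 'b) monoid_scheme \<Rightarrow> 'a set \<Rightarrow> 'a \<Rightarrow> 'a \<Rightarrow> bool" where
  "cox_le G S u v \<longleftrightarrow> u \<in> carrier G \<and> v \<in> carrier G \<and> par_comp G S (supp G S u) v = u"

definition covers_in :: "'a set \<Rightarrow> ('a \<Rightarrow> 'a \<Rightarrow> bool) \<Rightarrow> 'a \<Rightarrow> 'a \<Rightarrow> bool" where
  "covers_in A rel u v \<longleftrightarrow> u \<in> A \<and> v \<in> A \<and> rel u v \<and> u \<noteq> v \<and>
     (\<forall>w\<in>A. rel u w \<and> rel w v \<longrightarrow> w = u \<or> w = v)"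

definition is_lattice_on :: "'a set \<Rightarrow> ('a \<Rightarrow> 'a \<Rightarrow> bool) \<Rightarrow> bool" where
  "is_lattice_on A rel \<longleftrightarrow>
     (\<forall>x\<in>A. rel x x) \<and> (\<forall>x\<in>A. \<forall>y\<in>A. rel x y \<and> rel y x \<longrightarrow> x = y) \<and>
     (\<forall>x\<in>A. \<forall>y\<in>A. \<forall>z\<in>A. rel x y \<and> rel y z \<longrightarrow> rel x z) \<and>
     (\<forall>x\<in>A. \<forall>y\<in>A. \<exists>j\<in>A. rel x j \<and> rel y j \<and> (\<forall>z\<in>A. rel x z \<and> rel y z \<longrightarrow> rel j z)) \<and>
     (\<forall>x\<in>A. \<forall>y\<in>A. \<exists>m\<in>A. rel m x \<and> rel m y \<and> (\<forall>z\<in>A. rel z x \<and> rel z y \<longrightarrow> rel z m))"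

definition upper_semimodular_lattice_on :: "'a set \<Rightarrow> ('a \<Rightarrow> 'a \<Rightarrow> bool) \<Rightarrow> bool" where
  "upper_semimodular_lattice_on A rel \<longleftrightarrow> is_lattice_on A rel \<and>
     (\<forall>w\<in>A. \<forall>g\<in>A. \<forall>h\<in>A. covers_in A rel w g \<and> covers_in A rel w h \<and> g \<noteq> h \<longrightarrow>
        (\<exists>x\<in>A. covers_in A rel g x \<and> covers_in A rel h x))"

end

theory Submission
  imports Defs
begin


locale coxsys = group +
  fixes S :: "'a set"
  assumes cs: "coxeter_system G S"
begin

lemma S_carrier: "S \<subseteq> carrier G" and finite_S: "finite S" and one_notin: "\<one> \<notin> S"
  and gen: "carrier G = wprod G ` lists S"
  using cs by (auto simp: coxeter_system_def)

lemma cancel1[simp]: "g \<in> carrier G \<Longrightarrow> x \<in> carrier G \<Longrightarrow> g \<otimes> (inv g \<otimes> x) = x"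
  by (simp add: m_assoc[symmetric])
lemma cancel2[simp]: "g \<in> carrier G \<Longrightarrow> x \<in> carrier G \<Longrightarrow> inv g \<otimes> (g \<otimes> x) = x"
  by (simp add: m_assoc[symmetric])

lemma wprod_Nil[simp]: "wprod G [] = \<one>" by (simp add: wprod_def)
lemma wprod_Cons[simp]: "wprod G (x#xs) = x \<otimes> wprod G xs" by (simp add: wprod_def)

lemma lists_S_carrier: "xs \<in> lists S \<Longrightarrow> set xs \<subseteq> carrier G"
  using S_carrier by auto

lemma wprod_closed_c: "set xs \<subseteq> carrier G \<Longrightarrow> wprod G xs \<in> carrier G"
  by (induction xs) auto

lemma wprod_closed[simp]: "xs \<in> lists S \<Longrightarrow> wprod G xs \<in> carrier G"
  using wprod_closed_c lists_S_carrier by blast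

lemma wprod_append_c: "set xs \<subseteq> carrier G \<Longrightarrow> set ys \<subseteq> carrier G \<Longrightarrow>
   wprod G (xs @ ys) = wprod G xs \<otimes> wprod G ys"
  by (induction xs) (auto simp: m_assoc wprod_closed_c)

lemma wprod_append: "xs \<in> lists S \<Longrightarrow> ys \<in> lists S \<Longrightarrow>
   wprod G (xs @ ys) = wprod G xs \<otimes> wprod G ys"
  using wprod_append_c lists_S_carrier by blast

lemma S_c[simp]: "s \<in> S \<Longrightarrow> s \<in> carrier G" using S_carrier by auto

definition Rel where "Rel = (SOME m. coxeter_matrix S m \<and>
        (\<forall>xs\<in>lists S. wprod G xs = \<one> \<longleftrightarrow> (xs, []) \<in> (cox_step S m \<union> (cox_step S m)\<inverse>)\<^sup>*))"

lemma Rel: "coxeter_matrix S Rel" "\<And>xs. xs \<in> lists S \<Longrightarrow> wprod G xs = \<one> \<longleftrightarrow> (xs, []) \<in> (cox_step S Rel \<union> (cox_step S Rel)\<inverse>)\<^sup>*"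
proof -
  have "\<exists>m. coxeter_matrix S m \<and>
        (\<forall>xs\<in>lists S. wprod G xs = \<one> \<longleftrightarrow> (xs, []) \<in> (cox_step S m \<union> (cox_step S m)\<inverse>)\<^sup>*)"
    using cs by (auto simp: coxeter_system_def)
  then have "coxeter_matrix S Rel \<and>
        (\<forall>xs\<in>lists S. wprod G xs = \<one> \<longleftrightarrow> (xs, []) \<in> (cox_step S Rel \<union> (cox_step S Rel)\<inverse>)\<^sup>*)"
    unfolding Rel_def by (rule someI_ex)
  then show "coxeter_matrix S Rel" "\<And>xs. xs \<in> lists S \<Longrightarrow> wprod G xs = \<one> \<longleftrightarrow> (xs, []) \<in> (cox_step S Rel \<union> (cox_step S Rel)\<inverse>)\<^sup>*"
    by auto
qed

abbreviation "Cl \<equiv> (cox_step S Rel \<union> (cox_step S Rel)\<inverse>)\<^sup>*"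

lemma relator_one: "r \<in> relators S Rel \<Longrightarrow> wprod G r = \<one>"
proof -
  assume r: "r \<in> relators S Rel"
  then have rS: "r \<in> lists S" by (auto simp: relators_def split: if_splits)
  have "([] @ r @ [], [] @ []) \<in> cox_step S Rel" using r by (auto simp: cox_step_def)
  then have "(r, []) \<in> Cl" by auto
  then show ?thesis using Rel(2)[OF rS] by auto
qed

lemma ss[simp]: "s \<in> S \<Longrightarrow> s \<otimes> s = \<one>"
proof -
  assume s: "s \<in> S"
  have "Rel s s = 1" using Rel(1) s by (auto simp: coxeter_matrix_def)
  then have "[s,s] \<in> relators S Rel" using s unfolding relators_def one_enat_def
    by (auto intro!: exI[of _ s] exI[of _ 1])
  then show ?thesis using relator_one[of "[s,s]"] s by simp
qed

lemma inv_S[simp]: "s \<in> S \<Longrightarrow> inv s = s"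
  using inv_equality[of s s] by simp

lemma wprod_rev: "xs \<in> lists S \<Longrightarrow> wprod G (rev xs) = inv (wprod G xs)"
proof (induction xs)
  case Nil then show ?case by simp
next
  case (Cons x xs)
  then have "rev xs \<in> lists S" "[x] \<in> lists S" by auto
  then have "wprod G (rev (x#xs)) = wprod G (rev xs) \<otimes> wprod G [x]"
    using wprod_append by simp
  then show ?case using Cons by (simp add: inv_mult_group)
qed

end


definition alt :: "'a \<Rightarrow> 'a \<Rightarrow> nat \<Rightarrow> 'a" where "alt s t j = (if even j then s else t)"
definition L :: "'a \<Rightarrow> 'a \<Rightarrow> nat \<Rightarrow> nat \<Rightarrow> 'a list" where "L s t n i = map (alt s t) [i..<i+n]"

lemma L_length[simp]: "length (L s t n i) = n" by (simp add: L_def)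
lemma L_nth: "p < n \<Longrightarrow> L s t n i ! p = alt s t (i+p)" by (simp add: L_def)
lemma L_add: "L s t (m+n) i = L s t m i @ L s t n (i+m)"
  unfolding L_def using upt_add_eq_append[of i "i+m" n] by (simp add: add.assoc)
lemma L_two: "L s t 2 i = [alt s t i, alt s t (Suc i)]"
  by (simp add: L_def numeral_2_eq_2)
lemma L_shift2: "L s t n (i+2) = L s t n i"
  by (rule nth_equalityI) (auto simp: L_nth alt_def)
lemma L_rev: "rev (L s t n i) = L s t n (i+n-1)"
  by (rule nth_equalityI) (auto simp: L_nth alt_def rev_nth)
lemma L_set: "set (L s t n i) \<subseteq> {s,t}" by (auto simp: L_def alt_def)
lemma L_0_s: "L s t (2*k) 0 = concat (replicate k [s,t])"
proof (induction k)
  case 0 then show ?case by (simp add: L_def)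
next
  case (Suc k)
  have "L s t (2*Suc k) 0 = L s t 2 0 @ L s t (2*k) (0+2)" using L_add[of s t 2 "2*k" 0] by simp
  also have "\<dots> = [s,t] @ concat (replicate k [s,t])" using Suc by (simp only: L_shift2 L_two) (simp add: alt_def)
  finally show ?case by simp
qed
lemma L_1_s: "L s t (2*k) 1 = concat (replicate k [t,s])"
proof (induction k)
  case 0 then show ?case by (simp add: L_def)
next
  case (Suc k)
  have "L s t (2*Suc k) 1 = L s t 2 1 @ L s t (2*k) (1+2)" using L_add[of s t 2 "2*k" 1] by simp
  also have "\<dots> = [t,s] @ concat (replicate k [t,s])" using Suc by (simp only: L_shift2 L_two) (simp add: alt_def)
  finally show ?case by simp
qed
lemma L_mod: "L s t n i = L s t n (i mod 2)"
proof (induction i rule: less_induct)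
  case (less i)
  show ?case
  proof (cases "i < 2")
    case True then show ?thesis by simp
  next
    case False
    then obtain j where j: "i = j + 2" by (metis add.commute le_add_diff_inverse not_less)
    then show ?thesis using less[of j] L_shift2[of s t n j] by simp
  qed
qed

context coxsys
begin

abbreviation len where "len \<equiv> cox_len G S"

definition red :: "'a list \<Rightarrow> bool" where
  "red xs \<longleftrightarrow> xs \<in> lists S \<and> len (wprod G xs) = length xs"

lemma len_le: "xs \<in> lists S \<Longrightarrow> len (wprod G xs) \<le> length xs"
  unfolding cox_len_def by (rule Least_le) auto

lemma red_ex: assumes "g \<in> carrier G" shows "\<exists>xs. red xs \<and> wprod G xs = g"
proof -
  obtain xs0 where "xs0 \<in> lists S" "wprod G xs0 = g" using gen assms by auto
  then have "\<exists>n. \<exists>xs\<in>lists S. length xs = n \<and> wprod G xs = g" by blast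
  then have "\<exists>xs\<in>lists S. length xs = len g \<and> wprod G xs = g"
    unfolding cox_len_def by (rule LeastI_ex)
  then show ?thesis by (auto simp: red_def)
qed

lemma reduced_word_iff: "reduced_word G S xs w \<longleftrightarrow> red xs \<and> wprod G xs = w"
  by (auto simp: reduced_word_def red_def)

lemma len_mult: assumes "u \<in> carrier G" "v \<in> carrier G" shows "len (u \<otimes> v) \<le> len u + len v"
proof -
  obtain a b where "red a" "wprod G a = u" "red b" "wprod G b = v" using red_ex assms by metis
  then have ab: "a \<in> lists S" "b \<in> lists S" by (auto simp: red_def)
  then have "len (wprod G (a@b)) \<le> length (a@b)" "wprod G (a@b) = u \<otimes> v"
    using len_le[of "a@b"] wprod_append[OF ab] \<open>wprod G a = u\<close> \<open>wprod G b = v\<close> by auto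
  then show ?thesis using \<open>red a\<close> \<open>red b\<close> \<open>wprod G a = u\<close> \<open>wprod G b = v\<close> by (auto simp: red_def)
qed

lemma red_append: assumes "red (xs@ys)" shows "red xs" "red ys"
proof -
  have xs: "xs \<in> lists S" and ys: "ys \<in> lists S" using assms by (auto simp: red_def)
  have "len (wprod G (xs@ys)) \<le> len (wprod G xs) + len (wprod G ys)"
    using wprod_append[OF xs ys] len_mult xs ys by simp
  moreover have "len (wprod G xs) \<le> length xs" "len (wprod G ys) \<le> length ys"
    using len_le xs ys by auto
  ultimately show "red xs" "red ys" using assms xs ys by (auto simp: red_def)
qed

lemma red_Nil[simp]: "red []"
proof -
  have "len \<one> \<le> 0" using len_le[of "[]"] by simp
  then show ?thesis by (simp add: red_def)
qed

subsection \<open>Tits' construction\<close>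

definition pi :: "'a \<Rightarrow> 'a \<times> bool \<Rightarrow> 'a \<times> bool" where
  "pi x p = (x \<otimes> fst p \<otimes> x, snd p \<noteq> (fst p = x))"

primrec act :: "'a list \<Rightarrow> 'a \<times> bool \<Rightarrow> 'a \<times> bool" where
  "act [] = id" | "act (x#xs) = pi x \<circ> act xs"

primrec rl :: "'a list \<Rightarrow> 'a list" where
  "rl [] = []" | "rl (x#xs) = (inv (wprod G xs) \<otimes> x \<otimes> wprod G xs) # rl xs"

lemma act_append: "act (xs @ ys) = act xs \<circ> act ys"
  by (induction xs) (auto simp: comp_assoc)

lemma conj_eq: assumes "g \<in> carrier G" "t \<in> carrier G" "x \<in> carrier G"
  shows "(g \<otimes> t \<otimes> inv g = x) \<longleftrightarrow> (inv g \<otimes> x \<otimes> g = t)"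
proof
  assume "g \<otimes> t \<otimes> inv g = x"
  then have "inv g \<otimes> x \<otimes> g = inv g \<otimes> (g \<otimes> t \<otimes> inv g) \<otimes> g" by simp
  also have "\<dots> = t" using assms by (simp add: m_assoc)
  finally show "inv g \<otimes> x \<otimes> g = t" .
next
  assume "inv g \<otimes> x \<otimes> g = t"
  then have "g \<otimes> t \<otimes> inv g = g \<otimes> (inv g \<otimes> x \<otimes> g) \<otimes> inv g" by simp
  also have "\<dots> = x" using assms by (simp add: m_assoc)
  finally show "g \<otimes> t \<otimes> inv g = x" .
qed

lemma rl_carrier: "xs \<in> lists S \<Longrightarrow> set (rl xs) \<subseteq> carrier G"
  by (induction xs) auto

lemma act_formula: "xs \<in> lists S \<Longrightarrow> t \<in> carrier G \<Longrightarrow>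
  act xs (t,e) = (wprod G xs \<otimes> t \<otimes> inv (wprod G xs), e \<noteq> odd (count_list (rl xs) t))"
proof (induction xs)
  case Nil then show ?case by simp
next
  case (Cons x xs)
  let ?g = "wprod G xs"
  have x: "x \<in> carrier G" and g: "?g \<in> carrier G" and xsS: "xs \<in> lists S" using Cons.prems by auto
  have 1: "x \<otimes> (?g \<otimes> t \<otimes> inv ?g) \<otimes> x = (x \<otimes> ?g) \<otimes> t \<otimes> inv (x \<otimes> ?g)"
    using x g Cons.prems by (simp add: inv_mult_group m_assoc)
  have 2: "(?g \<otimes> t \<otimes> inv ?g = x) \<longleftrightarrow> (inv ?g \<otimes> x \<otimes> ?g = t)"
    using conj_eq x g Cons.prems by blast
  show ?case using Cons.IH[OF xsS Cons.prems(2)] 1 2 by (auto simp: pi_def)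
qed

end


lemma L_Cons: "L s t (Suc n) i = alt s t i # L s t n (Suc i)"
  by (rule nth_equalityI) (auto simp: L_nth nth_Cons split: nat.splits)
lemma L_drop: "drop p (L s t n i) = L s t (n - p) (i + p)"
  by (cases "p \<le> n") (auto simp: L_def drop_map)
lemma L_shift2k: "L s t n (i + 2*m) = L s t n i"
proof (induction m)
  case 0 then show ?case by simp
next
  case (Suc m)
  have "i + 2 * Suc m = (i + 2*m) + 2" by simp
  then show ?case using Suc L_shift2 by metis
qed
lemma count_distinct: "distinct xs \<Longrightarrow> count_list xs x = (if x \<in> set xs then 1 else 0)"
  by (induction xs) auto

context coxsys
begin

lemma rl_length[simp]: "length (rl xs) = length xs"
  by (induction xs) auto

lemma rl_nth: "j < length xs \<Longrightarrow>
   rl xs ! j = inv (wprod G (drop (Suc j) xs)) \<otimes> xs ! j \<otimes> wprod G (drop (Suc j) xs)"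
proof (induction xs arbitrary: j)
  case Nil then show ?case by simp
next
  case (Cons x xs) then show ?case by (cases j) auto
qed

lemma rl_append: "xs \<in> lists S \<Longrightarrow> ys \<in> lists S \<Longrightarrow>
  rl (xs @ ys) = map (\<lambda>r. inv (wprod G ys) \<otimes> r \<otimes> wprod G ys) (rl xs) @ rl ys"
proof (induction xs)
  case Nil then show ?case by simp
next
  case (Cons x xs)
  have X: "wprod G xs \<in> carrier G" and Y: "wprod G ys \<in> carrier G" and x: "x \<in> carrier G"
    using Cons.prems by auto
  have "wprod G (xs @ ys) = wprod G xs \<otimes> wprod G ys" using Cons.prems wprod_append by auto
  then have "inv (wprod G (xs @ ys)) \<otimes> x \<otimes> wprod G (xs @ ys) =
     inv (wprod G ys) \<otimes> (inv (wprod G xs) \<otimes> x \<otimes> wprod G xs) \<otimes> wprod G ys"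
    using X Y x by (simp add: inv_mult_group m_assoc)
  then show ?case using Cons by simp
qed

lemma L_S: "s \<in> S \<Longrightarrow> t \<in> S \<Longrightarrow> L s t n i \<in> lists S"
  using L_set[of s t n i] by auto

lemma alt_S: "s \<in> S \<Longrightarrow> t \<in> S \<Longrightarrow> alt s t j \<in> S"
  by (simp add: alt_def)

lemma relator_count:
  assumes s: "s \<in> S" and t: "t \<in> S"
    and r1: "wprod G (concat (replicate k [s,t])) = \<one>"
    and r2: "wprod G (concat (replicate k [t,s])) = \<one>"
  shows "even (count_list (rl (concat (replicate k [s,t]))) x)"
proof (cases "k = 0")
  case True then show ?thesis by simp
next
  case False
  then have k1: "k \<ge> 1" by simp
  let ?L = "L s t"
  let ?w = "\<lambda>n i. wprod G (?L n i)"
  have LS: "\<And>n i. ?L n i \<in> lists S" using L_S s t by auto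
  have wc: "\<And>n i. ?w n i \<in> carrier G" using LS by simp
  have ac: "\<And>j. alt s t j \<in> carrier G" using alt_S s t by simp
  have H1: "?w (2*k) i = \<one>" for i
  proof -
    have "i mod 2 = 0 \<or> i mod 2 = 1" by auto
    then show ?thesis using L_mod[of s t "2*k" i] L_0_s[of s t k] L_1_s[of s t k] r1 r2 by auto
  qed
  have wapp: "\<And>m n i. ?w (m+n) i = ?w m i \<otimes> ?w n (i+m)"
    using L_add wprod_append LS by metis
  define c where "c h r = inv h \<otimes> r \<otimes> h" for h r
  have key: "c (?w k (Suc j)) (alt s t j) = alt s t (j+k)" for j
  proof -
    let ?P = "?w k (Suc j)" and ?a = "alt s t j" and ?b = "alt s t (j+k)"
    have "?a \<otimes> ?P = ?w (Suc k) j" using L_Cons[of s t k j] by simp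
    have P: "?P = ?w (k-1) (Suc j) \<otimes> ?b"
      using wapp[of "k-1" 1 "Suc j"] k1 L_Cons[of s t 0] ac by (simp add: L_def)
    have Pb: "?P \<otimes> ?b = ?w (k-1) (Suc j)"
      using P wc ac alt_S[OF s t] by (simp add: m_assoc)
    have "?w (Suc k) j \<otimes> ?w (k-1) (j + Suc k) = \<one>"
      using wapp[of "Suc k" "k-1" j] H1[of j] k1 by (simp add: mult_2)
    then have "?w (Suc k) j = inv (?w (k-1) (j + Suc k))"
      using inv_equality[of "?w (Suc k) j" "?w (k-1) (j + Suc k)"] wc by simp
    also have "\<dots> = wprod G (rev (?L (k-1) (j + Suc k)))" using wprod_rev[of "?L (k-1) (j + Suc k)"] LS by simp
    also have "\<dots> = ?w (k-1) (j + Suc k + (k-1) - 1)" using L_rev[of s t "k-1" "j + Suc k"] by simp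
    also have "\<dots> = ?w (k-1) (Suc j)"
    proof -
      have "j + Suc k + (k-1) - 1 = Suc j + 2*(k-1)" using k1 by simp
      then show ?thesis by (simp only: L_shift2k)
    qed
    finally have "?a \<otimes> ?P = ?P \<otimes> ?b" using Pb \<open>?a \<otimes> ?P = ?w (Suc k) j\<close> by simp
    then have "inv ?P \<otimes> (?a \<otimes> ?P) = inv ?P \<otimes> (?P \<otimes> ?b)" by simp
    then show ?thesis unfolding c_def using wc ac by (simp add: m_assoc)
  qed
  have cc: "c (a \<otimes> b) r = c b (c a r)" if "a \<in> carrier G" "b \<in> carrier G" "r \<in> carrier G" for a b r
    using that by (simp add: c_def inv_mult_group m_assoc)
  have eqh: "map (c (?w k k)) (rl (?L k 0)) = rl (?L k k)"
  proof (rule nth_equalityI)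
    show "length (map (c (?w k k)) (rl (?L k 0))) = length (rl (?L k k))" by simp
  next
    fix j assume "j < length (map (c (?w k k)) (rl (?L k 0)))"
    then have j: "j < k" by simp
    have d1: "drop (Suc j) (?L k 0) = ?L (k - Suc j) (Suc j)" using L_drop[of "Suc j" s t k 0] by simp
    have d2: "drop (Suc j) (?L k k) = ?L (k - Suc j) (k + Suc j)" using L_drop[of "Suc j" s t k k] by simp
    have lhs: "map (c (?w k k)) (rl (?L k 0)) ! j = c (?w k k) (c (?w (k - Suc j) (Suc j)) (alt s t j))"
      using j rl_nth[of j "?L k 0"] d1 by (simp add: L_nth c_def)
    have rhs: "rl (?L k k) ! j = c (?w (k - Suc j) (k + Suc j)) (alt s t (k+j))"
      using j rl_nth[of j "?L k k"] d2 by (simp add: L_nth c_def)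
    have "?w (k - Suc j) (Suc j) \<otimes> ?w k k = ?w (k - Suc j + k) (Suc j)"
      using wapp[of "k - Suc j" k "Suc j"] j by simp
    also have "\<dots> = ?w k (Suc j) \<otimes> ?w (k - Suc j) (Suc j + k)"
      using wapp[of k "k - Suc j" "Suc j"] j by (simp add: add.commute)
    finally have e: "?w (k - Suc j) (Suc j) \<otimes> ?w k k = ?w k (Suc j) \<otimes> ?w (k - Suc j) (k + Suc j)"
      by (simp add: add.commute)
    have "c (?w k k) (c (?w (k - Suc j) (Suc j)) (alt s t j))
        = c (?w (k - Suc j) (Suc j) \<otimes> ?w k k) (alt s t j)" using cc wc ac by (simp add: c_def)
    also have "\<dots> = c (?w (k - Suc j) (k + Suc j)) (c (?w k (Suc j)) (alt s t j))"
      using e cc wc ac by simp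
    also have "\<dots> = c (?w (k - Suc j) (k + Suc j)) (alt s t (k+j))" using key[of j] by (simp add: add.commute)
    finally show "map (c (?w k k)) (rl (?L k 0)) ! j = rl (?L k k) ! j" using lhs rhs by simp
  qed
  have "concat (replicate k [s,t]) = ?L k 0 @ ?L k k"
    using L_0_s[of s t k] L_add[of s t k k 0] by (simp add: mult_2)
  then have "rl (concat (replicate k [s,t])) = map (c (?w k k)) (rl (?L k 0)) @ rl (?L k k)"
    using rl_append[of "?L k 0" "?L k k"] LS by (simp add: c_def)
  then show ?thesis using eqh by simp
qed

end


context coxsys
begin

lemma ss2[simp]: "s \<in> S \<Longrightarrow> x \<in> carrier G \<Longrightarrow> s \<otimes> (s \<otimes> x) = x"
  by (simp add: m_assoc[symmetric])

lemma relators_S: "r \<in> relators S Rel \<Longrightarrow> r \<in> lists S"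
  by (auto simp: relators_def split: if_splits)

lemma act_relator: assumes r: "r \<in> relators S Rel" and t: "t \<in> carrier G"
  shows "act r (t,e) = (t,e)"
proof -
  obtain s t' k where st: "r = concat (replicate k [s,t'])" "s \<in> S" "t' \<in> S" "Rel s t' = enat k"
    using r by (auto simp: relators_def)
  then have "Rel t' s = enat k" using Rel(1) by (auto simp: coxeter_matrix_def)
  then have "concat (replicate k [t',s]) \<in> relators S Rel" using st by (auto simp: relators_def)
  then have r2: "wprod G (concat (replicate k [t',s])) = \<one>" by (rule relator_one)
  have r1: "wprod G r = \<one>" using r by (rule relator_one)
  have "even (count_list (rl r) t)" using relator_count[OF st(2,3)] r1 r2 st(1) by simp
  then show ?thesis using act_formula[OF relators_S[OF r] t] r1 t by simp
qed

lemma act_fst: "xs \<in> lists S \<Longrightarrow> t \<in> carrier G \<Longrightarrow> fst (act xs (t,e)) \<in> carrier G"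
  using act_formula by simp

lemma act_step: assumes "(a,b) \<in> cox_step S Rel" "t \<in> carrier G"
  shows "act a (t,e) = act b (t,e)"
proof -
  obtain xs ys r where d: "a = xs @ r @ ys" "b = xs @ ys" "xs \<in> lists S" "ys \<in> lists S"
    "r \<in> relators S Rel" using assms(1) by (auto simp: cox_step_def)
  obtain t' e' where te: "act ys (t,e) = (t',e')" by (cases "act ys (t,e)")
  then have "t' \<in> carrier G" using act_fst[OF d(4) assms(2), of e] by simp
  then have "act r (t',e') = (t',e')" using act_relator d(5) by simp
  then show ?thesis using d te by (simp add: act_append)
qed

lemma act_Cl: assumes "(a,b) \<in> Cl" shows "\<forall>t\<in>carrier G. \<forall>e. act a (t,e) = act b (t,e)"
  using assms
proof (induction rule: rtrancl_induct)
  case base then show ?case by simp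
next
  case (step b c)
  then show ?case using act_step by auto
qed

lemma act_trivial: assumes "zs \<in> lists S" "wprod G zs = \<one>" "t \<in> carrier G"
  shows "act zs (t,e) = (t,e)"
proof -
  have "(zs, []) \<in> Cl" using Rel(2)[OF assms(1)] assms(2) by simp
  then show ?thesis using act_Cl assms(3) by fastforce
qed

lemma act_eq: assumes xs: "xs \<in> lists S" and ys: "ys \<in> lists S" and eq: "wprod G xs = wprod G ys"
  and t: "t \<in> carrier G" shows "act xs (t,e) = act ys (t,e)"
proof -
  have rys: "rev ys \<in> lists S" using ys by auto
  have "wprod G (rev ys @ ys) = \<one>" using wprod_append[OF rys ys] wprod_rev[OF ys] ys by simp
  then have 1: "act (rev ys @ ys) (t,e) = (t,e)" using act_trivial rys ys t by simp
  have "wprod G (xs @ rev ys) = \<one>" using wprod_append[OF xs rys] wprod_rev[OF ys] eq ys by simp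
  moreover obtain t' e' where te: "act ys (t,e) = (t',e')" by (cases "act ys (t,e)")
  moreover have "t' \<in> carrier G" using act_fst[OF ys t, of e] te by simp
  moreover have "xs @ rev ys \<in> lists S" using xs rys by simp
  ultimately have 2: "act (xs @ rev ys) (act ys (t,e)) = act ys (t,e)"
    using act_trivial[of "xs @ rev ys" t'] by simp
  have "act xs (t,e) = act xs (act (rev ys @ ys) (t,e))" using 1 by simp
  also have "\<dots> = act (xs @ rev ys) (act ys (t,e))" by (simp add: act_append)
  finally show ?thesis using 2 by simp
qed

definition N :: "'a list \<Rightarrow> 'a set" where
  "N xs = {t \<in> carrier G. odd (count_list (rl xs) t)}"

lemma N_eq: assumes "xs \<in> lists S" "ys \<in> lists S" "wprod G xs = wprod G ys"
  shows "N xs = N ys"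
proof -
  have "odd (count_list (rl xs) t) \<longleftrightarrow> odd (count_list (rl ys) t)" if "t \<in> carrier G" for t
    using act_eq[OF assms that, of False] act_formula[OF assms(1) that, of False]
      act_formula[OF assms(2) that, of False] by simp
  then show ?thesis unfolding N_def by auto
qed

lemma N_snoc: assumes xs: "xs \<in> lists S" and s: "s \<in> S"
  shows "N (xs @ [s]) = {t \<in> carrier G. (t = s) \<noteq> (s \<otimes> t \<otimes> s \<in> N xs)}"
proof -
  have "odd (count_list (rl (xs@[s])) t) \<longleftrightarrow> ((t = s) \<noteq> (s \<otimes> t \<otimes> s \<in> N xs))" if t: "t \<in> carrier G" for t
  proof -
    have xs': "xs @ [s] \<in> lists S" using xs s by auto
    have c: "s \<otimes> t \<otimes> s \<in> carrier G" using s t by simp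
    have "act (xs @ [s]) (t, False) = act xs (s \<otimes> t \<otimes> s, t = s)"
      by (simp add: act_append pi_def)
    then show ?thesis using act_formula[OF xs' t, of False] act_formula[OF xs c, of "t = s"]
      c by (auto simp: N_def)
  qed
  then show ?thesis unfolding N_def by auto
qed

lemma rl_mem: "r \<in> set (rl xs) \<Longrightarrow> \<exists>as z bs. xs = as @ z # bs \<and> r = inv (wprod G bs) \<otimes> z \<otimes> wprod G bs"
proof (induction xs)
  case Nil then show ?case by simp
next
  case (Cons x xs)
  show ?case
  proof (cases "r = inv (wprod G xs) \<otimes> x \<otimes> wprod G xs")
    case True then show ?thesis by (metis append_Nil)
  next
    case False
    then have "r \<in> set (rl xs)" using Cons.prems by simp
    then obtain as z bs where "xs = as @ z # bs" "r = inv (wprod G bs) \<otimes> z \<otimes> wprod G bs"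
      using Cons.IH by blast
    then show ?thesis by (metis append_Cons)
  qed
qed

lemma del_lemma: assumes "as @ z # bs \<in> lists S"
  shows "wprod G (as @ z # bs) \<otimes> (inv (wprod G bs) \<otimes> z \<otimes> wprod G bs) = wprod G (as @ bs)"
proof -
  have as: "as \<in> lists S" and bs: "bs \<in> lists S" and z: "z \<in> S" using assms by auto
  have zbs: "z # bs \<in> lists S" using bs z by simp
  let ?A = "wprod G as" and ?B = "wprod G bs"
  have A: "?A \<in> carrier G" and B: "?B \<in> carrier G" using as bs by auto
  have "wprod G (as @ z # bs) \<otimes> (inv ?B \<otimes> z \<otimes> ?B) = ?A \<otimes> (z \<otimes> ?B) \<otimes> (inv ?B \<otimes> z \<otimes> ?B)"
    using wprod_append[OF as zbs] by simp
  also have "\<dots> = ?A \<otimes> (z \<otimes> (?B \<otimes> inv ?B) \<otimes> z) \<otimes> ?B" using A B z by (simp add: m_assoc)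
  also have "\<dots> = ?A \<otimes> ?B" using A B z by (simp add: m_assoc)
  finally show ?thesis using wprod_append[OF as bs] by simp
qed

lemma distinct_rl: "red xs \<Longrightarrow> distinct (rl xs)"
proof (induction xs)
  case Nil then show ?case by simp
next
  case (Cons x xs)
  have rxs: "red xs" using red_append(2)[of "[x]" xs] Cons.prems by simp
  have xs: "xs \<in> lists S" and x: "x \<in> S" using Cons.prems by (auto simp: red_def)
  let ?g = "wprod G xs"
  have g: "?g \<in> carrier G" using xs by simp
  have "inv ?g \<otimes> x \<otimes> ?g \<notin> set (rl xs)"
  proof
    assume "inv ?g \<otimes> x \<otimes> ?g \<in> set (rl xs)"
    then obtain as z bs where d: "xs = as @ z # bs" "inv ?g \<otimes> x \<otimes> ?g = inv (wprod G bs) \<otimes> z \<otimes> wprod G bs"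
      using rl_mem by blast
    have "x \<otimes> ?g = ?g \<otimes> (inv ?g \<otimes> x \<otimes> ?g)" using g x by (simp add: m_assoc)
    also have "\<dots> = wprod G (as @ bs)" using d del_lemma xs by simp
    finally have "wprod G (x # xs) = wprod G (as @ bs)" by simp
    moreover have "as @ bs \<in> lists S" using xs d by auto
    ultimately have "len (wprod G (x#xs)) \<le> length (as @ bs)" using len_le by metis
    then show False using Cons.prems d by (simp add: red_def)
  qed
  then show ?case using Cons.IH rxs by simp
qed

lemma N_red: assumes "red xs" shows "card (N xs) = length xs"
proof -
  have "N xs = set (rl xs)" using count_distinct[OF distinct_rl[OF assms]] rl_carrier assms
    by (auto simp: N_def red_def)
  then show ?thesis using distinct_card[OF distinct_rl[OF assms]] by simp
qed

lemma len_N: assumes "xs \<in> lists S" shows "len (wprod G xs) = card (N xs)"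
proof -
  have "wprod G xs \<in> carrier G" using assms by simp
  then obtain ys where ys: "red ys" "wprod G ys = wprod G xs" using red_ex by blast
  have ysS: "ys \<in> lists S" and lys: "len (wprod G ys) = length ys" using ys(1) by (auto simp: red_def)
  have "N ys = N xs" using N_eq[OF ysS assms ys(2)] .
  then show ?thesis using N_red[OF ys(1)] lys ys(2) by simp
qed

lemma finite_N: "finite (N xs)"
proof -
  have "N xs \<subseteq> set (rl xs)"
  proof
    fix t assume "t \<in> N xs"
    then have "odd (count_list (rl xs) t)" by (simp add: N_def)
    then have "count_list (rl xs) t \<noteq> 0" by (metis even_zero)
    then show "t \<in> set (rl xs)" using count_list_0_iff by metis
  qed
  then show ?thesis using finite_subset by blast
qed

lemma len_snoc: assumes xs: "xs \<in> lists S" and s: "s \<in> S"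
  shows "(s \<in> N xs \<longrightarrow> len (wprod G xs \<otimes> s) + 1 = len (wprod G xs))
       \<and> (s \<notin> N xs \<longrightarrow> len (wprod G xs \<otimes> s) = len (wprod G xs) + 1)"
proof -
  have xs': "xs @ [s] \<in> lists S" using xs s by simp
  have w: "wprod G (xs @ [s]) = wprod G xs \<otimes> s" using wprod_append[OF xs, of "[s]"] s xs by simp
  define f where "f t = s \<otimes> t \<otimes> s" for t
  have ff: "t \<in> carrier G \<Longrightarrow> f (f t) = t" for t using s by (simp add: f_def m_assoc)
  have fc: "t \<in> carrier G \<Longrightarrow> f t \<in> carrier G" for t using s by (simp add: f_def)
  have inj: "inj_on f (carrier G)" by (metis ff inj_onI)
  have Nc: "N xs \<subseteq> carrier G" by (auto simp: N_def)
  have cardf: "card (f ` N xs) = card (N xs)" using card_image[OF inj_on_subset[OF inj Nc]] .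
  have fs: "f s = s" using s by (simp add: f_def)
  have Ns: "t \<in> N (xs @ [s]) \<longleftrightarrow> t \<in> carrier G \<and> ((t = s) \<noteq> (f t \<in> N xs))" for t
    using N_snoc[OF xs s] unfolding f_def by blast
  have img: "t \<in> f ` N xs \<longleftrightarrow> t \<in> carrier G \<and> f t \<in> N xs" for t
  proof
    assume "t \<in> f ` N xs"
    then obtain u where "u \<in> N xs" "t = f u" by blast
    then show "t \<in> carrier G \<and> f t \<in> N xs" using ff fc Nc by auto
  next
    assume "t \<in> carrier G \<and> f t \<in> N xs"
    then have "f (f t) \<in> f ` N xs" by blast
    then show "t \<in> f ` N xs" using ff \<open>t \<in> carrier G \<and> f t \<in> N xs\<close> by simp
  qed
  have sc: "s \<in> carrier G" using s by simp
  show ?thesis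
  proof (intro conjI impI)
    assume sN: "s \<in> N xs"
    have "N (xs @ [s]) = f ` N xs - {s}"
    proof (rule Set.set_eqI)
      fix t show "t \<in> N (xs @ [s]) \<longleftrightarrow> t \<in> f ` N xs - {s}"
      proof (cases "t = s")
        case True
        have "s \<notin> N (xs @ [s])" using Ns[of s] fs sN by simp
        then show ?thesis using True by simp
      next
        case False
        then show ?thesis using Ns[of t] img[of t] by simp
      qed
    qed
    moreover have "s \<in> f ` N xs" unfolding img using sN fs sc by simp
    moreover have "finite (f ` N xs)" using finite_N by simp
    ultimately have "card (N (xs @ [s])) + 1 = card (N xs)"
    proof -
      assume a: "N (xs @ [s]) = f ` N xs - {s}" "s \<in> f ` N xs" "finite (f ` N xs)"
      have "card (f ` N xs) > 0" using a(2,3) card_gt_0_iff by blast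
      moreover have "card (N (xs @ [s])) = card (f ` N xs) - 1" using a(1) card_Diff_singleton[OF a(2)] by simp
      ultimately show ?thesis using cardf by linarith
    qed
    then show "len (wprod G xs \<otimes> s) + 1 = len (wprod G xs)" using len_N[OF xs] len_N[OF xs'] w by simp
  next
    assume sN: "s \<notin> N xs"
    have "N (xs @ [s]) = insert s (f ` N xs)"
    proof (rule Set.set_eqI)
      fix t show "t \<in> N (xs @ [s]) \<longleftrightarrow> t \<in> insert s (f ` N xs)"
      proof (cases "t = s")
        case True
        have "s \<in> N (xs @ [s])" using Ns[of s] fs sN sc by simp
        then show ?thesis using True by simp
      next
        case False
        then show ?thesis using Ns[of t] img[of t] by simp
      qed
    qed
    moreover have "s \<notin> f ` N xs" unfolding img using sN fs by simp
    ultimately have "card (N (xs @ [s])) = card (N xs) + 1"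
      using cardf finite_N by simp
    then show "len (wprod G xs \<otimes> s) = len (wprod G xs) + 1" using len_N[OF xs] len_N[OF xs'] w by simp
  qed
qed

end


lemma append_split3: "a @ ys = as @ z # bs \<Longrightarrow>
  (\<exists>cs. a = as @ z # cs \<and> bs = cs @ ys) \<or> (\<exists>ds. as = a @ ds \<and> ys = ds @ z # bs)"
proof -
  assume "a @ ys = as @ z # bs"
  then have "\<exists>us. a = as @ us \<and> us @ ys = z # bs \<or> a @ us = as \<and> ys = us @ z # bs"
    by (simp add: append_eq_append_conv2)
  then show ?thesis by (metis append_Nil append_Nil2 append_eq_Cons_conv)
qed

context coxsys
begin

lemma pm1: assumes "g \<in> carrier G" "s \<in> S"
  shows "len (g \<otimes> s) + 1 = len g \<or> len (g \<otimes> s) = len g + 1"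
proof -
  obtain xs where "xs \<in> lists S" "wprod G xs = g" using gen assms(1) by auto
  then show ?thesis using len_snoc[of xs s] assms(2) by blast
qed

lemma exchange: assumes xs: "xs \<in> lists S" and s: "s \<in> S"
  and lt: "len (wprod G xs \<otimes> s) < len (wprod G xs)"
  shows "\<exists>as z bs. xs = as @ z # bs \<and> wprod G xs \<otimes> s = wprod G (as @ bs)"
proof -
  have "s \<in> N xs" using len_snoc[OF xs s] lt by auto
  then have "odd (count_list (rl xs) s)" by (simp add: N_def)
  then have "count_list (rl xs) s \<noteq> 0" by (metis even_zero)
  then have "s \<in> set (rl xs)" using count_list_0_iff by metis
  then obtain as z bs where d: "xs = as @ z # bs" "s = inv (wprod G bs) \<otimes> z \<otimes> wprod G bs"
    using rl_mem by blast
  then show ?thesis using del_lemma xs by auto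
qed

lemma len_one[simp]: "len \<one> = 0"
  using len_le[of "[]"] by simp

lemma len_zero: assumes "g \<in> carrier G" "len g = 0" shows "g = \<one>"
proof -
  obtain xs where "red xs" "wprod G xs = g" using red_ex assms(1) by blast
  then show ?thesis using assms(2) by (simp add: red_def)
qed

lemma len_S: assumes "s \<in> S" shows "len s = 1"
proof -
  have "len (wprod G [s]) \<le> 1" using len_le[of "[s]"] assms by simp
  then have "len s \<le> 1" using assms by simp
  moreover have "len s \<noteq> 0" using len_zero[of s] one_notin assms by auto
  ultimately show ?thesis by simp
qed

lemma shorten: "xs \<in> lists S \<Longrightarrow> len (wprod G xs) < length xs \<Longrightarrow>
  \<exists>ys. set ys \<subseteq> set xs \<and> length ys < length xs \<and> wprod G ys = wprod G xs"
proof (induction xs rule: rev_induct)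
  case Nil then show ?case by simp
next
  case (snoc s xs)
  have xs: "xs \<in> lists S" and s: "s \<in> S" using snoc.prems by auto
  have w: "wprod G (xs @ [s]) = wprod G xs \<otimes> s" using wprod_append[OF xs, of "[s]"] s by simp
  show ?case
  proof (cases "len (wprod G xs) < length xs")
    case True
    then obtain ys where ys: "set ys \<subseteq> set xs" "length ys < length xs" "wprod G ys = wprod G xs"
      using snoc.IH xs by blast
    then have ysS: "ys \<in> lists S" using xs by auto
    have "wprod G (ys @ [s]) = wprod G ys \<otimes> s" using wprod_append[OF ysS, of "[s]"] s by simp
    then show ?thesis using ys w by (intro exI[of _ "ys @ [s]"]) auto
  next
    case False
    then have e: "len (wprod G xs) = length xs" using len_le[OF xs] by simp
    have "len (wprod G xs \<otimes> s) < len (wprod G xs) + 1" using snoc.prems(2) w e by simp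
    then have "len (wprod G xs \<otimes> s) < len (wprod G xs)" using pm1[of "wprod G xs" s] xs s by auto
    then obtain as z bs where d: "xs = as @ z # bs" "wprod G xs \<otimes> s = wprod G (as @ bs)"
      using exchange xs s by blast
    then show ?thesis using w by (intro exI[of _ "as @ bs"]) auto
  qed
qed

lemma red_in: assumes I: "I \<subseteq> S" shows "xs \<in> lists I \<Longrightarrow> \<exists>ys \<in> lists I. red ys \<and> wprod G ys = wprod G xs"
proof (induction xs rule: length_induct)
  case (1 xs)
  have xsS: "xs \<in> lists S" using 1(2) I by auto
  show ?case
  proof (cases "red xs")
    case True then show ?thesis using 1(2) by blast
  next
    case False
    then have "len (wprod G xs) < length xs" using len_le[OF xsS] xsS by (simp add: red_def)
    then obtain ys where ys: "set ys \<subseteq> set xs" "length ys < length xs" "wprod G ys = wprod G xs"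
      using shorten xsS by blast
    then have "ys \<in> lists I" using 1(2) by auto
    then show ?thesis using 1(1) ys by metis
  qed
qed

abbreviation W where "W I \<equiv> par_sub G I"

lemma W_def': "W I = wprod G ` lists I" by (simp add: par_sub_def)

lemma W_one: "\<one> \<in> W I"
  unfolding W_def' by (rule image_eqI[of _ _ "[]"]) auto

lemma W_carrier: "I \<subseteq> S \<Longrightarrow> W I \<subseteq> carrier G"
  unfolding W_def' using wprod_closed lists_mono by blast

lemma W_mult: assumes "I \<subseteq> S" "x \<in> W I" "y \<in> W I" shows "x \<otimes> y \<in> W I"
proof -
  obtain a b where "a \<in> lists I" "b \<in> lists I" "x = wprod G a" "y = wprod G b"
    using assms(2,3) unfolding W_def' by auto
  moreover have "a \<in> lists S" "b \<in> lists S" using calculation assms(1) lists_mono by auto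
  ultimately show ?thesis unfolding W_def' using wprod_append by (intro image_eqI[of _ _ "a @ b"]) auto
qed

lemma W_inv: assumes "I \<subseteq> S" "x \<in> W I" shows "inv x \<in> W I"
proof -
  obtain a where "a \<in> lists I" "x = wprod G a" using assms(2) unfolding W_def' by auto
  moreover have "a \<in> lists S" using calculation assms(1) lists_mono by auto
  ultimately show ?thesis unfolding W_def' using wprod_rev by (intro image_eqI[of _ _ "rev a"]) auto
qed

lemma W_gen: "s \<in> I \<Longrightarrow> s \<in> S \<Longrightarrow> s \<in> W I"
  unfolding W_def' by (rule image_eqI[of _ _ "[s]"]) auto

lemma W_mono: "I \<subseteq> J \<Longrightarrow> W I \<subseteq> W J"
  unfolding W_def' using lists_mono by blast

lemma W_red: assumes "I \<subseteq> S" "w \<in> W I" shows "\<exists>ys \<in> lists I. red ys \<and> wprod G ys = w"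
  using assms red_in unfolding W_def' by blast

lemma S_in_W: assumes I: "I \<subseteq> S" and s: "s \<in> S" and sW: "s \<in> W I" shows "s \<in> I"
proof -
  obtain ys where ys: "ys \<in> lists I" "red ys" "wprod G ys = s" using W_red I sW by blast
  then have "length ys = 1" using len_S s by (simp add: red_def)
  then obtain y where "ys = [y]" by (metis One_nat_def length_0_conv length_Suc_conv)
  then show ?thesis using ys I by auto
qed

lemma red_W_set: assumes I: "I \<subseteq> S" shows "red xs \<Longrightarrow> wprod G xs \<in> W I \<Longrightarrow> set xs \<subseteq> I"
proof (induction xs rule: rev_induct)
  case Nil then show ?case by simp
next
  case (snoc s xs)
  have xs: "xs \<in> lists S" and s: "s \<in> S" using snoc.prems by (auto simp: red_def)
  have rxs: "red xs" using red_append snoc.prems(1) by blast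
  let ?w = "wprod G (xs @ [s])"
  have w: "?w = wprod G xs \<otimes> s" using wprod_append[OF xs, of "[s]"] s by simp
  have wc: "?w \<in> carrier G" using xs s by simp
  have ws: "?w \<otimes> s = wprod G xs" using w xs s by (simp add: m_assoc)
  have "len (?w \<otimes> s) < len ?w" using ws rxs snoc.prems(1) by (simp add: red_def)
  obtain b where b: "b \<in> lists I" "red b" "wprod G b = ?w" using W_red I snoc.prems(2) by blast
  have bS: "b \<in> lists S" using b(1) I by auto
  obtain as z bs where d: "b = as @ z # bs" "?w \<otimes> s = wprod G (as @ bs)"
    using exchange[OF bS s] \<open>len (?w \<otimes> s) < len ?w\<close> b(3) by auto
  have "as @ bs \<in> lists I" using b(1) d(1) by auto
  then have wsW: "?w \<otimes> s \<in> W I" using d(2) unfolding W_def' by auto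
  have "s = inv ?w \<otimes> (?w \<otimes> s)" using wc s by simp
  then have "s \<in> W I" using W_mult[OF I W_inv[OF I snoc.prems(2)] wsW] by simp
  then have "s \<in> I" using S_in_W I s by blast
  moreover have "set xs \<subseteq> I" using snoc.IH rxs ws wsW by simp
  ultimately show ?case by simp
qed

lemma supp_mem: "x \<in> supp G S w \<longleftrightarrow> (\<exists>xs. red xs \<and> wprod G xs = w \<and> x \<in> set xs)"
proof
  assume "x \<in> supp G S w"
  then obtain xs where "reduced_word G S xs w" "x \<in> set xs" unfolding supp_def by blast
  then show "\<exists>xs. red xs \<and> wprod G xs = w \<and> x \<in> set xs" using reduced_word_iff by blast
next
  assume "\<exists>xs. red xs \<and> wprod G xs = w \<and> x \<in> set xs"
  then obtain xs where "reduced_word G S xs w" "x \<in> set xs" using reduced_word_iff by blast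
  then show "x \<in> supp G S w" unfolding supp_def by blast
qed

lemma supp_S: "supp G S w \<subseteq> S"
proof
  fix x assume "x \<in> supp G S w"
  then obtain xs where "red xs" "x \<in> set xs" using supp_mem by blast
  then show "x \<in> S" by (auto simp: red_def)
qed

lemma finite_supp: "finite (supp G S w)"
  using supp_S finite_S finite_subset by blast

lemma supp_W: assumes "I \<subseteq> S" "w \<in> W I" shows "supp G S w \<subseteq> I"
proof
  fix x assume "x \<in> supp G S w"
  then obtain xs where "red xs" "wprod G xs = w" "x \<in> set xs" using supp_mem by blast
  then show "x \<in> I" using red_W_set[OF assms(1)] assms(2) by blast
qed

lemma W_supp: assumes "w \<in> carrier G" shows "w \<in> W (supp G S w)"
proof -
  obtain xs where xs: "red xs" "wprod G xs = w" using red_ex assms by blast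
  then have "set xs \<subseteq> supp G S w" using supp_mem by blast
  then have "xs \<in> lists (supp G S w)" by auto
  then show ?thesis using xs unfolding W_def' by auto
qed

lemma supp_W_iff: "I \<subseteq> S \<Longrightarrow> w \<in> carrier G \<Longrightarrow> w \<in> W I \<longleftrightarrow> supp G S w \<subseteq> I"
  using supp_W W_supp W_mono by (meson subsetD)

lemma supp_one: "supp G S \<one> = {}"
  using supp_W[of "{}" \<one>] W_one by simp

end


context coxsys
begin

definition M :: "'a set \<Rightarrow> 'a set" where
  "M I = {x \<in> carrier G. \<forall>v\<in>W I. len x \<le> len (x \<otimes> v)}"

lemma additivity_red: assumes I: "I \<subseteq> S" and x: "x \<in> M I"
  shows "ys \<in> lists I \<Longrightarrow> red ys \<Longrightarrow> len (x \<otimes> wprod G ys) = len x + length ys"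
proof (induction ys rule: rev_induct)
  case Nil
  have "x \<in> carrier G" using x by (simp add: M_def)
  then show ?case by simp
next
  case (snoc s ys)
  have xc: "x \<in> carrier G" using x by (simp add: M_def)
  have ysI: "ys \<in> lists I" and sI: "s \<in> I" using snoc.prems by auto
  have ysS: "ys \<in> lists S" and s: "s \<in> S" using ysI sI I by auto
  have rys: "red ys" using red_append snoc.prems(2) by blast
  let ?Y = "wprod G ys"
  have Yc: "?Y \<in> carrier G" using ysS by simp
  have Ys: "wprod G (ys @ [s]) = ?Y \<otimes> s" using wprod_append[OF ysS, of "[s]"] s by simp
  have lYs: "len (?Y \<otimes> s) = length ys + 1" using snoc.prems(2) Ys by (simp add: red_def)
  have IH: "len (x \<otimes> ?Y) = len x + length ys" using snoc.IH ysI rys by simp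
  show ?case
  proof (rule ccontr)
    assume ne: "len (x \<otimes> wprod G (ys @ [s])) \<noteq> len x + length (ys @ [s])"
    have "len (x \<otimes> ?Y \<otimes> s) + 1 = len (x \<otimes> ?Y) \<or> len (x \<otimes> ?Y \<otimes> s) = len (x \<otimes> ?Y) + 1"
      using pm1 xc Yc s by simp
    then have lt: "len (x \<otimes> ?Y \<otimes> s) < len (x \<otimes> ?Y)" using ne IH Ys xc Yc s by (auto simp: m_assoc)
    obtain a where a: "red a" "wprod G a = x" using red_ex xc by blast
    have aS: "a \<in> lists S" using a(1) by (simp add: red_def)
    have ay: "wprod G (a @ ys) = x \<otimes> ?Y" using wprod_append[OF aS ysS] a(2) by simp
    have ayS: "a @ ys \<in> lists S" using aS ysS by simp
    obtain as z bs where d: "a @ ys = as @ z # bs" "wprod G (a @ ys) \<otimes> s = wprod G (as @ bs)"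
      using exchange[OF ayS s] lt ay by auto
    from append_split3[OF d(1)] show False
    proof
      assume "\<exists>cs. a = as @ z # cs \<and> bs = cs @ ys"
      then obtain cs where cs: "a = as @ z # cs" "bs = cs @ ys" by blast
      have asS: "as \<in> lists S" and csS: "cs \<in> lists S" using aS cs(1) by auto
      let ?C = "wprod G (as @ cs)"
      have Cc: "?C \<in> carrier G" using asS csS by simp
      have "wprod G (as @ bs) = ?C \<otimes> ?Y" using cs(2) wprod_append[of "as @ cs" ys] asS csS ysS by simp
      then have "x \<otimes> ?Y \<otimes> s = ?C \<otimes> ?Y" using d(2) ay by simp
      then have "x \<otimes> ?Y \<otimes> s \<otimes> inv ?Y = ?C" using Cc Yc by (simp add: m_assoc)
      then have C: "x \<otimes> (?Y \<otimes> s \<otimes> inv ?Y) = ?C" using xc Yc s by (simp add: m_assoc)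
      have vW: "?Y \<otimes> s \<otimes> inv ?Y \<in> W I"
        using W_mult[OF I W_mult[OF I _ W_gen[OF sI s]] W_inv[OF I]] ysI unfolding W_def' by auto
      have "len ?C \<le> length (as @ cs)" using len_le[of "as @ cs"] asS csS by simp
      also have "\<dots> < length a" using cs(1) by simp
      also have "\<dots> = len x" using a by (simp add: red_def)
      finally have "len (x \<otimes> (?Y \<otimes> s \<otimes> inv ?Y)) < len x" using C by simp
      then show False using x vW by (auto simp: M_def)
    next
      assume "\<exists>ds. as = a @ ds \<and> ys = ds @ z # bs"
      then obtain ds where ds: "as = a @ ds" "ys = ds @ z # bs" by blast
      have dsS: "ds \<in> lists S" and bsS: "bs \<in> lists S" using ysS ds(2) by auto
      have Dc: "wprod G (ds @ bs) \<in> carrier G" using dsS bsS by simp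
      have "wprod G (as @ bs) = x \<otimes> wprod G (ds @ bs)"
        using ds(1) wprod_append[of a "ds @ bs"] aS dsS bsS a(2) by simp
      then have "x \<otimes> (?Y \<otimes> s) = x \<otimes> wprod G (ds @ bs)" using d(2) ay xc Yc s by (simp add: m_assoc)
      then have "?Y \<otimes> s = wprod G (ds @ bs)" using xc Yc s Dc by simp
      moreover have "len (wprod G (ds @ bs)) \<le> length (ds @ bs)" using len_le[of "ds @ bs"] dsS bsS by simp
      ultimately show False using lYs ds(2) by simp
    qed
  qed
qed

lemma additivity: assumes I: "I \<subseteq> S" and x: "x \<in> M I" and y: "y \<in> W I"
  shows "len (x \<otimes> y) = len x + len y"
proof -
  obtain ys where ys: "ys \<in> lists I" "red ys" "wprod G ys = y" using W_red I y by blast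
  then show ?thesis using additivity_red[OF I x ys(1,2)] by (simp add: red_def)
qed

lemma M_carrier: "M I \<subseteq> carrier G" by (auto simp: M_def)

lemma M_min: assumes I: "I \<subseteq> S" shows "M I \<subseteq> min_reps G S I"
proof
  fix x assume x: "x \<in> M I"
  have "\<forall>s\<in>I. len (x \<otimes> s) > len x"
  proof
    fix s assume "s \<in> I"
    then have "len (x \<otimes> s) = len x + 1" using additivity[OF I x W_gen[of s I]] len_S I by auto
    then show "len (x \<otimes> s) > len x" by simp
  qed
  then show "x \<in> min_reps G S I" using x by (simp add: min_reps_def M_def)
qed

lemma dec_ex: assumes I: "I \<subseteq> S" and w: "w \<in> carrier G" shows "\<exists>v\<in>W I. w \<otimes> v \<in> M I"
proof -
  let ?P = "\<lambda>n. \<exists>v\<in>W I. len (w \<otimes> v) = n"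
  have "?P (len (w \<otimes> \<one>))" using W_one by blast
  then have "?P (LEAST n. ?P n)" by (rule LeastI)
  then obtain v where v: "v \<in> W I" "len (w \<otimes> v) = (LEAST n. ?P n)" by blast
  have vc: "v \<in> carrier G" using v(1) W_carrier I by blast
  have "w \<otimes> v \<in> M I"
    unfolding M_def
  proof (intro CollectI conjI ballI)
    show "w \<otimes> v \<in> carrier G" using w vc by simp
  next
    fix u assume u: "u \<in> W I"
    then have uc: "u \<in> carrier G" using W_carrier I by blast
    have "?P (len (w \<otimes> (v \<otimes> u)))" using W_mult[OF I v(1) u] by blast
    then have "(LEAST n. ?P n) \<le> len (w \<otimes> (v \<otimes> u))" by (rule Least_le)
    then show "len (w \<otimes> v) \<le> len (w \<otimes> v \<otimes> u)" using v(2) w vc uc by (simp add: m_assoc)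
  qed
  then show ?thesis using v(1) by blast
qed

lemma min_M: assumes I: "I \<subseteq> S" shows "min_reps G S I \<subseteq> M I"
proof
  fix x assume x: "x \<in> min_reps G S I"
  have xc: "x \<in> carrier G" using x by (simp add: min_reps_def)
  obtain v where v: "v \<in> W I" "x \<otimes> v \<in> M I" using dec_ex I xc by blast
  have vc: "v \<in> carrier G" using v(1) W_carrier I by blast
  let ?x0 = "x \<otimes> v" and ?y = "inv v"
  have yW: "?y \<in> W I" using W_inv I v(1) by blast
  have xe: "x = ?x0 \<otimes> ?y" using xc vc by (simp add: m_assoc)
  have lx: "len x = len ?x0 + len ?y" using additivity[OF I v(2) yW] xe by simp
  show "x \<in> M I"
  proof (cases "?y = \<one>")
    case True
    then have "x = ?x0" using xe xc vc by simp
    then show ?thesis using v(2) by simp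
  next
    case False
    obtain ys where ys: "ys \<in> lists I" "red ys" "wprod G ys = ?y" using W_red I yW by blast
    have "ys \<noteq> []" using ys False by auto
    then obtain ys' s where ys': "ys = ys' @ [s]" by (metis rev_exhaust)
    have sI: "s \<in> I" and ys'I: "ys' \<in> lists I" using ys(1) ys' by auto
    have s: "s \<in> S" and ys'S: "ys' \<in> lists S" using sI ys'I I by auto
    let ?Y = "wprod G ys'"
    have Yc: "?Y \<in> carrier G" using ys'S by simp
    have "?y = ?Y \<otimes> s" using ys(3) ys' wprod_append[OF ys'S, of "[s]"] s by simp
    then have "v \<otimes> (?Y \<otimes> s) = \<one>" using vc r_inv[OF vc] by metis
    then have "v \<otimes> ?Y \<otimes> s \<otimes> s = s" using vc Yc s by (simp add: m_assoc)
    then have "v \<otimes> ?Y = s" using vc Yc s by (simp add: m_assoc)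
    then have "x \<otimes> s = ?x0 \<otimes> ?Y" using xc vc Yc s by (simp add: m_assoc)
    then have "len (x \<otimes> s) \<le> len ?x0 + len ?Y" using len_mult xc vc Yc by simp
    also have "\<dots> \<le> len ?x0 + length ys'" using len_le[OF ys'S] by simp
    also have "\<dots> < len ?x0 + length ys" using ys' by simp
    also have "\<dots> = len x" using lx ys by (simp add: red_def)
    finally have "len (x \<otimes> s) < len x" .
    then show ?thesis using x sI by (auto simp: min_reps_def)
  qed
qed

lemma M_eq: "I \<subseteq> S \<Longrightarrow> min_reps G S I = M I"
  using M_min min_M by blast

lemma comp_ex1: assumes I: "I \<subseteq> S" and w: "w \<in> carrier G"
  shows "\<exists>!v. v \<in> W I \<and> w \<otimes> inv v \<in> min_reps G S I"
proof -
  obtain v where v: "v \<in> W I" "w \<otimes> v \<in> M I" using dec_ex I w by blast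
  have vc: "v \<in> carrier G" using v(1) W_carrier I by blast
  have ex: "inv v \<in> W I \<and> w \<otimes> inv (inv v) \<in> min_reps G S I"
    using W_inv[OF I v(1)] v(2) vc M_eq[OF I] by simp
  have uniq: "v1 = v2" if h1: "v1 \<in> W I" "w \<otimes> inv v1 \<in> min_reps G S I"
      and h2: "v2 \<in> W I" "w \<otimes> inv v2 \<in> min_reps G S I" for v1 v2
  proof -
    have c1: "v1 \<in> carrier G" and c2: "v2 \<in> carrier G" using h1 h2 W_carrier I by auto
    have m1: "w \<otimes> inv v1 \<in> M I" and m2: "w \<otimes> inv v2 \<in> M I" using h1 h2 M_eq[OF I] by auto
    have u12: "v1 \<otimes> inv v2 \<in> W I" using W_mult[OF I h1(1) W_inv[OF I h2(1)]] .
    have u21: "v2 \<otimes> inv v1 \<in> W I" using W_mult[OF I h2(1) W_inv[OF I h1(1)]] .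
    have e1: "w \<otimes> inv v2 = (w \<otimes> inv v1) \<otimes> (v1 \<otimes> inv v2)" using c1 c2 w by (simp add: m_assoc)
    have e2: "w \<otimes> inv v1 = (w \<otimes> inv v2) \<otimes> (v2 \<otimes> inv v1)" using c1 c2 w by (simp add: m_assoc)
    have "len (w \<otimes> inv v2) = len (w \<otimes> inv v1) + len (v1 \<otimes> inv v2)"
      using additivity[OF I m1 u12] e1 by simp
    moreover have "len (w \<otimes> inv v1) = len (w \<otimes> inv v2) + len (v2 \<otimes> inv v1)"
      using additivity[OF I m2 u21] e2 by simp
    ultimately have "len (v1 \<otimes> inv v2) = 0" by simp
    then have "v1 \<otimes> inv v2 = \<one>" using len_zero c1 c2 by simp
    then show "v1 = v2" using c1 c2 by (metis inv_closed inv_equality inv_inv)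
  qed
  show ?thesis using ex uniq by blast
qed

abbreviation comp where "comp I w \<equiv> par_comp G S I w"

lemma comp_props: assumes I: "I \<subseteq> S" and w: "w \<in> carrier G"
  shows "comp I w \<in> W I" "w \<otimes> inv (comp I w) \<in> M I"
proof -
  have "comp I w \<in> W I \<and> w \<otimes> inv (comp I w) \<in> min_reps G S I"
    unfolding par_comp_def using theI'[OF comp_ex1[OF I w]] .
  then show "comp I w \<in> W I" "w \<otimes> inv (comp I w) \<in> M I" using M_eq[OF I] by auto
qed

lemma comp_eq: assumes I: "I \<subseteq> S" and w: "w \<in> carrier G" and v: "v \<in> W I" "w \<otimes> inv v \<in> M I"
  shows "comp I w = v"
  unfolding par_comp_def using the1_equality[OF comp_ex1[OF I w]] v M_eq[OF I] by simp

lemma comp_carrier: "I \<subseteq> S \<Longrightarrow> w \<in> carrier G \<Longrightarrow> comp I w \<in> carrier G"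
  using comp_props W_carrier by blast

lemma comp_len: assumes I: "I \<subseteq> S" and w: "w \<in> carrier G"
  shows "len w = len (w \<otimes> inv (comp I w)) + len (comp I w)"
proof -
  have c: "comp I w \<in> carrier G" using comp_carrier I w by blast
  have "w = (w \<otimes> inv (comp I w)) \<otimes> comp I w" using c w by (simp add: m_assoc)
  then show ?thesis using additivity[OF I comp_props(2)[OF I w] comp_props(1)[OF I w]] by simp
qed

lemma one_M: "\<one> \<in> M I" by (simp add: M_def)

lemma comp_id: assumes I: "I \<subseteq> S" and w: "w \<in> W I" shows "comp I w = w"
proof -
  have wc: "w \<in> carrier G" using w W_carrier I by blast
  show ?thesis using comp_eq[OF I wc w] wc one_M by simp
qed

lemma comp_of: assumes I: "I \<subseteq> S" and x: "x \<in> M I" and v: "v \<in> W I"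
  shows "comp I (x \<otimes> v) = v"
proof -
  have xc: "x \<in> carrier G" using x M_carrier by blast
  have vc: "v \<in> carrier G" using v W_carrier I by blast
  have "x \<otimes> v \<otimes> inv v = x" using xc vc by (simp add: m_assoc)
  then show ?thesis using comp_eq[OF I _ v] x xc vc by simp
qed

lemma supp_comp: assumes I: "I \<subseteq> S" and w: "w \<in> carrier G"
  shows "supp G S (comp I w) \<subseteq> supp G S w"
proof
  fix y assume "y \<in> supp G S (comp I w)"
  then obtain b where b: "red b" "wprod G b = comp I w" "y \<in> set b" using supp_mem by blast
  let ?x = "w \<otimes> inv (comp I w)"
  have c: "comp I w \<in> carrier G" using comp_carrier I w by blast
  have xc: "?x \<in> carrier G" using c w by simp
  obtain a where a: "red a" "wprod G a = ?x" using red_ex xc by blast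
  have aS: "a \<in> lists S" and bS: "b \<in> lists S" using a b by (auto simp: red_def)
  have "wprod G (a @ b) = w" using wprod_append[OF aS bS] a b c w by (simp add: m_assoc)
  moreover have "length (a @ b) = len w" using comp_len[OF I w] a b by (simp add: red_def)
  ultimately have "red (a @ b)" using aS bS by (simp add: red_def)
  then show "y \<in> supp G S w" using supp_mem \<open>wprod G (a @ b) = w\<close> b(3) by fastforce
qed

lemma comp_trans: assumes K: "K \<subseteq> J" and J: "J \<subseteq> S" and w: "w \<in> carrier G"
  shows "comp K (comp J w) = comp K w"
proof -
  have KS: "K \<subseteq> S" using K J by blast
  let ?c = "comp J w"
  let ?x = "w \<otimes> inv ?c"
  have cc: "?c \<in> carrier G" using comp_carrier J w by blast
  have cW: "?c \<in> W J" and xM: "?x \<in> M J" using comp_props J w by auto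
  let ?d = "comp K ?c"
  let ?y = "?c \<otimes> inv ?d"
  have dc: "?d \<in> carrier G" using comp_carrier KS cc by blast
  have dW: "?d \<in> W K" and yM: "?y \<in> M K" using comp_props KS cc by auto
  have dWJ: "?d \<in> W J" using dW W_mono K by blast
  have yWJ: "?y \<in> W J" using W_mult[OF J cW W_inv[OF J dWJ]] .
  have xc: "?x \<in> carrier G" and yc: "?y \<in> carrier G" using xM yM M_carrier by auto
  have xyM: "?x \<otimes> ?y \<in> M K"
  proof -
    have "\<forall>s\<in>K. len (?x \<otimes> ?y \<otimes> s) > len (?x \<otimes> ?y)"
    proof
      fix s assume sK: "s \<in> K"
      have s: "s \<in> S" using sK KS by blast
      have ysW: "?y \<otimes> s \<in> W J" using W_mult[OF J yWJ W_gen[of s J]] sK K s by blast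
      have "len (?x \<otimes> ?y \<otimes> s) = len (?x \<otimes> (?y \<otimes> s))" using xc yc s by (simp add: m_assoc)
      also have "\<dots> = len ?x + len (?y \<otimes> s)" using additivity[OF J xM ysW] .
      also have "\<dots> > len ?x + len ?y" using yM M_eq[OF KS] sK by (auto simp: min_reps_def)
      also have "len ?x + len ?y = len (?x \<otimes> ?y)" using additivity[OF J xM yWJ] by simp
      finally show "len (?x \<otimes> ?y \<otimes> s) > len (?x \<otimes> ?y)" .
    qed
    then show ?thesis using M_eq[OF KS] xc yc by (auto simp: min_reps_def)
  qed
  have "w = (?x \<otimes> ?y) \<otimes> ?d" using w cc dc by (simp add: m_assoc)
  then show ?thesis using comp_of[OF KS xyM dW] by simp
qed

end


context coxsys
begin

abbreviation sp where "sp w \<equiv> supp G S w"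
abbreviation le where "le \<equiv> cox_le G S"

lemma le_def': "le u v \<longleftrightarrow> u \<in> carrier G \<and> v \<in> carrier G \<and> comp (sp u) v = u"
  by (simp add: cox_le_def)

lemma le_refl: "u \<in> carrier G \<Longrightarrow> le u u"
  using comp_id[OF supp_S W_supp] by (simp add: le_def')

lemma le_supp: assumes "le u v" shows "sp u \<subseteq> sp v"
proof -
  have "comp (sp u) v = u" "v \<in> carrier G" using assms by (auto simp: le_def')
  then show ?thesis using supp_comp[OF supp_S, of v "u"] by simp
qed

lemma le_antisym: assumes "le u v" "le v u" shows "u = v"
proof -
  have e: "sp u = sp v" using le_supp assms by (simp add: subset_antisym)
  have vc: "v \<in> carrier G" using assms by (simp add: le_def')
  have "u = comp (sp u) v" using assms(1) by (simp add: le_def')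
  also have "\<dots> = comp (sp v) v" using e by simp
  also have "\<dots> = v" using comp_id[OF supp_S W_supp[OF vc]] .
  finally show ?thesis .
qed

lemma le_trans: assumes uv: "le u v" and vw: "le v w" shows "le u w"
proof -
  have uc: "u \<in> carrier G" and wc: "w \<in> carrier G" using uv vw by (auto simp: le_def')
  have "comp (sp u) w = comp (sp u) (comp (sp v) w)"
    using comp_trans[OF le_supp[OF uv] supp_S wc] by simp
  also have "\<dots> = u" using uv vw by (simp add: le_def')
  finally show ?thesis using uc wc by (simp add: le_def')
qed

lemma comp_sub: "J \<subseteq> S \<Longrightarrow> v \<in> carrier G \<Longrightarrow> sp (comp J v) \<subseteq> J"
  using supp_W[OF _ comp_props(1)] by simp

lemma comp_le: assumes J: "J \<subseteq> S" and v: "v \<in> carrier G" shows "le (comp J v) v"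
proof -
  let ?c = "comp J v"
  have cc: "?c \<in> carrier G" using comp_carrier J v by blast
  have "comp (sp ?c) v = comp (sp ?c) ?c" using comp_trans[OF comp_sub[OF J v] J v] by simp
  also have "\<dots> = ?c" using comp_id[OF supp_S W_supp[OF cc]] .
  finally show ?thesis using cc v by (simp add: le_def')
qed

lemma le_iff_supp: assumes uv: "le u v" and wv: "le w v" shows "le u w \<longleftrightarrow> sp u \<subseteq> sp w"
proof
  assume "le u w" then show "sp u \<subseteq> sp w" by (rule le_supp)
next
  assume sub: "sp u \<subseteq> sp w"
  have uc: "u \<in> carrier G" and wc: "w \<in> carrier G" and vc: "v \<in> carrier G" using uv wv by (auto simp: le_def')
  have "comp (sp u) w = comp (sp u) (comp (sp w) v)" using wv by (simp add: le_def')
  also have "\<dots> = comp (sp u) v" using comp_trans[OF sub supp_S vc] .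
  also have "\<dots> = u" using uv by (simp add: le_def')
  finally show "le u w" using uc wc by (simp add: le_def')
qed

lemma le_eq_supp: assumes "le u v" "le w v" "sp u = sp w" shows "u = w"
proof -
  have "le u w" "le w u" using le_iff_supp[OF assms(1,2)] le_iff_supp[OF assms(2,1)] assms(3) by auto
  then show ?thesis by (rule le_antisym)
qed

lemma supp_comp_mono: assumes JK: "J \<subseteq> K" and K: "K \<subseteq> S" and v: "v \<in> carrier G"
  shows "sp (comp J v) \<subseteq> sp (comp K v)"
proof -
  have "comp J v = comp J (comp K v)" using comp_trans[OF JK K v] by simp
  then show ?thesis using supp_comp[of J "comp K v"] JK K comp_carrier[OF K v] by auto
qed

lemma le_comp: "le w v \<Longrightarrow> comp (sp w) v = w" by (simp add: le_def')

lemma access: assumes uv: "le u v" and ne: "u \<noteq> v"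
  shows "\<exists>a. a \<in> sp v \<and> a \<notin> sp u \<and> sp (comp (insert a (sp u)) v) = insert a (sp u)"
proof -
  let ?J = "sp u"
  have JS: "?J \<subseteq> S" by (rule supp_S)
  have uc: "u \<in> carrier G" and vc: "v \<in> carrier G" using uv by (auto simp: le_def')
  have ucomp: "comp ?J v = u" using uv by (simp add: le_def')
  let ?x = "v \<otimes> inv u"
  have xM: "?x \<in> M ?J" using comp_props(2)[OF JS vc] ucomp by simp
  have xc: "?x \<in> carrier G" using uc vc by simp
  have x1: "?x \<noteq> \<one>"
  proof
    assume "?x = \<one>"
    moreover have "v = v \<otimes> inv u \<otimes> u" using uc vc by (simp add: m_assoc)
    ultimately have "v = u" using uc by simp
    then show False using ne by simp
  qed
  obtain xs where xs: "red xs" "wprod G xs = ?x" using red_ex xc by blast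
  have "xs \<noteq> []" using xs x1 by auto
  then obtain xs' a where xs': "xs = xs' @ [a]" by (metis rev_exhaust)
  have xsS: "xs \<in> lists S" using xs by (simp add: red_def)
  then have a: "a \<in> S" and xs'S: "xs' \<in> lists S" using xs' by auto
  have X'c: "wprod G xs' \<in> carrier G" using xs'S by simp
  have "?x = wprod G xs' \<otimes> a" using xs(2) xs' wprod_append[OF xs'S, of "[a]"] a by simp
  then have xa: "?x \<otimes> a = wprod G xs'" using X'c a by (simp add: m_assoc)
  have lxa: "len (?x \<otimes> a) < len ?x"
  proof -
    have "len (?x \<otimes> a) \<le> length xs'" using xa len_le[OF xs'S] by simp
    also have "\<dots> < length xs" using xs' by simp
    finally show ?thesis using xs by (simp add: red_def)
  qed
  have aJ: "a \<notin> ?J"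
  proof
    assume "a \<in> ?J"
    then have "len (?x \<otimes> a) > len ?x" using xM M_eq[OF JS] by (auto simp: min_reps_def)
    then show False using lxa by simp
  qed
  have av: "a \<in> sp v"
  proof -
    obtain b where b: "red b" "wprod G b = u" using red_ex uc by blast
    have bS: "b \<in> lists S" using b by (simp add: red_def)
    have "wprod G (xs @ b) = v" using wprod_append[OF xsS bS] xs b uc vc by (simp add: m_assoc)
    moreover have "length (xs @ b) = len v" using comp_len[OF JS vc] ucomp xs b by (simp add: red_def)
    ultimately have "red (xs @ b)" using xsS bS by (simp add: red_def)
    moreover have "a \<in> set (xs @ b)" using xs' by simp
    ultimately show ?thesis using supp_mem \<open>wprod G (xs @ b) = v\<close> by blast
  qed
  let ?J' = "insert a ?J"
  have J'S: "?J' \<subseteq> S" using JS a by simp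
  let ?c = "comp ?J' v"
  have cc: "?c \<in> carrier G" using comp_carrier J'S vc by blast
  have csub: "sp ?c \<subseteq> ?J'" using comp_sub[OF J'S vc] .
  have ac: "a \<in> sp ?c"
  proof (rule ccontr)
    assume "a \<notin> sp ?c"
    then have "sp ?c \<subseteq> ?J" using csub by blast
    then have cW: "?c \<in> W ?J" using supp_W_iff[OF JS cc] by simp
    have "u = comp ?J (comp ?J' v)" using comp_trans[of ?J ?J' v] J'S vc ucomp by (simp add: subset_insertI)
    also have "\<dots> = ?c" using comp_id[OF JS cW] .
    finally have "?x \<in> M ?J'" using comp_props(2)[OF J'S vc] by simp
    then have "len (?x \<otimes> a) > len ?x" using M_eq[OF J'S] by (auto simp: min_reps_def)
    then show False using lxa by simp
  qed
  have "?J \<subseteq> sp ?c" using supp_comp_mono[of ?J ?J' v] J'S vc ucomp by auto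
  then have "sp ?c = ?J'" using csub ac by blast
  then show ?thesis using av aJ by blast
qed

lemma W_empty: "W {} = {\<one>}"
  unfolding W_def' by auto

lemma one_le: "x \<in> carrier G \<Longrightarrow> le \<one> x"
proof -
  assume x: "x \<in> carrier G"
  have "comp {} x \<in> W {}" using comp_props(1)[of "{}" x] x by simp
  then have "comp {} x = \<one>" using W_empty by simp
  then show ?thesis using comp_le[of "{}" x] x by simp
qed

lemma le_one: "le y \<one> \<Longrightarrow> y = \<one>"
proof -
  assume "le y \<one>"
  then have "sp y = {}" using le_supp supp_one by blast
  moreover have "y \<in> carrier G" using \<open>le y \<one>\<close> by (simp add: le_def')
  ultimately have "y \<in> W {}" using W_supp by metis
  then show ?thesis using W_empty by simp
qed

lemma conj1: "{x \<in> carrier G. \<not> (\<exists>y\<in>carrier G. le y x \<and> y \<noteq> x)} = {\<one>}"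
proof (rule Set.set_eqI)
  fix x
  show "x \<in> {x \<in> carrier G. \<not> (\<exists>y\<in>carrier G. le y x \<and> y \<noteq> x)} \<longleftrightarrow> x \<in> {\<one>}"
  proof
    assume "x \<in> {x \<in> carrier G. \<not> (\<exists>y\<in>carrier G. le y x \<and> y \<noteq> x)}"
    then have "x \<in> carrier G" "\<not> (\<exists>y\<in>carrier G. le y x \<and> y \<noteq> x)" by auto
    then show "x \<in> {\<one>}" using one_le by fastforce
  next
    assume "x \<in> {\<one>}"
    then have "x = \<one>" by simp
    then show "x \<in> {x \<in> carrier G. \<not> (\<exists>y\<in>carrier G. le y x \<and> y \<noteq> x)}" using le_one by auto
  qed
qed

lemma conj3: assumes "covers_in (carrier G) le u v" shows "card (sp v) = card (sp u) + 1"
proof -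
  have uv: "le u v" and ne: "u \<noteq> v" and cov: "\<forall>w\<in>carrier G. le u w \<and> le w v \<longrightarrow> w = u \<or> w = v"
    using assms by (auto simp: covers_in_def)
  have vc: "v \<in> carrier G" using uv by (simp add: le_def')
  obtain a where a: "a \<in> sp v" "a \<notin> sp u" "sp (comp (insert a (sp u)) v) = insert a (sp u)"
    using access[OF uv ne] by blast
  let ?c = "comp (insert a (sp u)) v"
  have J'S: "insert a (sp u) \<subseteq> S" using a(1) supp_S by blast
  have cv: "le ?c v" using comp_le[OF J'S vc] .
  have uc: "le u ?c" using le_iff_supp[OF uv cv] a(3) by auto
  have "?c \<noteq> u" using a(2,3) by auto
  then have "?c = v" using cov cv uc by (auto simp: le_def')
  then have "sp v = insert a (sp u)" using a(3) by simp
  then show ?thesis using a(2) finite_supp by simp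
qed

lemma conj4: assumes uv: "le u v"
  shows "upper_semimodular_lattice_on {w \<in> carrier G. le u w \<and> le w v} le"
proof -
  let ?A = "{w \<in> carrier G. le u w \<and> le w v}"
  have vc: "v \<in> carrier G" using uv by (simp add: le_def')
  have Av: "\<And>w. w \<in> ?A \<Longrightarrow> le w v" by simp
  have Au: "\<And>w. w \<in> ?A \<Longrightarrow> le u w" by simp
  have inA: "comp J v \<in> ?A" if J: "J \<subseteq> S" and uJ: "sp u \<subseteq> sp (comp J v)" for J
  proof -
    have "le (comp J v) v" using comp_le[OF J vc] .
    moreover have "le u (comp J v)" using le_iff_supp[OF uv calculation] uJ by simp
    ultimately show ?thesis by (simp add: le_def')
  qed
  have join: "sp (comp (sp x \<union> sp y) v) = sp x \<union> sp y" if "x \<in> ?A" "y \<in> ?A" for x y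
  proof -
    have S: "sp x \<union> sp y \<subseteq> S" using supp_S by blast
    have "sp x \<subseteq> sp (comp (sp x \<union> sp y) v)"
      using supp_comp_mono[of "sp x" "sp x \<union> sp y" v] S vc le_comp[OF Av[OF that(1)]] by auto
    moreover have "sp y \<subseteq> sp (comp (sp x \<union> sp y) v)"
      using supp_comp_mono[of "sp y" "sp x \<union> sp y" v] S vc le_comp[OF Av[OF that(2)]] by auto
    ultimately show ?thesis using comp_sub[OF S vc] by blast
  qed
  have lat: "is_lattice_on ?A le"
    unfolding is_lattice_on_def
  proof (intro conjI ballI impI)
    fix x assume "x \<in> ?A" then show "le x x" using le_refl by simp
  next
    fix x y assume "x \<in> ?A" "y \<in> ?A" "le x y \<and> le y x" then show "x = y" using le_antisym by blast
  next
    fix x y z assume "x \<in> ?A" "y \<in> ?A" "z \<in> ?A" "le x y \<and> le y z" then show "le x z" using le_trans by blast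
  next
    fix x y assume x: "x \<in> ?A" and y: "y \<in> ?A"
    let ?j = "comp (sp x \<union> sp y) v"
    have S: "sp x \<union> sp y \<subseteq> S" using supp_S by blast
    have sj: "sp ?j = sp x \<union> sp y" using join x y by blast
    have jv: "le ?j v" using comp_le[OF S vc] .
    have jA: "?j \<in> ?A" using inA[OF S] sj le_supp[OF Au[OF x]] by blast
    have "le x ?j" "le y ?j" using le_iff_supp[OF Av[OF x] jv] le_iff_supp[OF Av[OF y] jv] sj by auto
    moreover have "\<forall>z\<in>?A. le x z \<and> le y z \<longrightarrow> le ?j z"
    proof (intro ballI impI)
      fix z assume z: "z \<in> ?A" and h: "le x z \<and> le y z"
      then have "sp x \<union> sp y \<subseteq> sp z" using le_supp by blast
      then show "le ?j z" using le_iff_supp[OF jv Av[OF z]] sj by simp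
    qed
    ultimately show "\<exists>j\<in>?A. le x j \<and> le y j \<and> (\<forall>z\<in>?A. le x z \<and> le y z \<longrightarrow> le j z)" using jA by blast
  next
    fix x y assume x: "x \<in> ?A" and y: "y \<in> ?A"
    let ?I = "sp x \<inter> sp y"
    let ?m = "comp ?I v"
    have S: "?I \<subseteq> S" using supp_S by blast
    have mv: "le ?m v" using comp_le[OF S vc] .
    have msub: "sp ?m \<subseteq> ?I" using comp_sub[OF S vc] .
    have "sp u \<subseteq> ?I" using le_supp Au[OF x] Au[OF y] by blast
    then have "sp u \<subseteq> sp ?m"
      using supp_comp_mono[of "sp u" ?I v] S vc le_comp[OF uv] by auto
    then have mA: "?m \<in> ?A" using inA[OF S] by blast
    have "le ?m x" "le ?m y" using le_iff_supp[OF mv Av[OF x]] le_iff_supp[OF mv Av[OF y]] msub by auto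
    moreover have "\<forall>z\<in>?A. le z x \<and> le z y \<longrightarrow> le z ?m"
    proof (intro ballI impI)
      fix z assume z: "z \<in> ?A" and h: "le z x \<and> le z y"
      then have "sp z \<subseteq> ?I" using le_supp by blast
      then have "sp z \<subseteq> sp ?m" using supp_comp_mono[of "sp z" ?I v] S vc le_comp[OF Av[OF z]] by auto
      then show "le z ?m" using le_iff_supp[OF Av[OF z] mv] by simp
    qed
    ultimately show "\<exists>m\<in>?A. le m x \<and> le m y \<and> (\<forall>z\<in>?A. le z x \<and> le z y \<longrightarrow> le z m)" using mA by blast
  qed
  have cover_supp: "\<exists>a. a \<notin> sp w \<and> sp g = insert a (sp w)"
    if w: "w \<in> ?A" and g: "g \<in> ?A" and cov: "covers_in ?A le w g" for w g
  proof -
    have wg: "le w g" and ne: "w \<noteq> g" and cv: "\<forall>z\<in>?A. le w z \<and> le z g \<longrightarrow> z = w \<or> z = g"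
      using cov by (auto simp: covers_in_def)
    have gc: "g \<in> carrier G" using g by simp
    obtain a where a: "a \<in> sp g" "a \<notin> sp w" "sp (comp (insert a (sp w)) g) = insert a (sp w)"
      using access[OF wg ne] by blast
    let ?c = "comp (insert a (sp w)) g"
    have J'S: "insert a (sp w) \<subseteq> S" using a(1) supp_S by blast
    have cg: "le ?c g" using comp_le[OF J'S gc] .
    have wc: "le w ?c" using le_iff_supp[OF wg cg] a(3) by auto
    have cA: "?c \<in> ?A" using le_trans[OF Au[OF w] wc] le_trans[OF cg Av[OF g]] by (simp add: le_def')
    have "?c \<noteq> w" using a(2,3) by auto
    moreover have "?c = w \<or> ?c = g" using cv cA cg wc by (meson bspec)
    ultimately have "?c = g" by simp
    then have "sp g = insert a (sp w)" using a(3) by simp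
    then show ?thesis using a(2) by blast
  qed
  have semi: "\<exists>x\<in>?A. covers_in ?A le g x \<and> covers_in ?A le h x"
    if w: "w \<in> ?A" and g: "g \<in> ?A" and h: "h \<in> ?A" and cg: "covers_in ?A le w g"
       and ch: "covers_in ?A le w h" and gh: "g \<noteq> h" for w g h
  proof -
    obtain a where a: "a \<notin> sp w" "sp g = insert a (sp w)" using cover_supp[OF w g cg] by blast
    obtain b where b: "b \<notin> sp w" "sp h = insert b (sp w)" using cover_supp[OF w h ch] by blast
    have ab: "a \<noteq> b"
    proof
      assume "a = b"
      then have "sp g = sp h" using a b by simp
      then show False using le_eq_supp[OF Av[OF g] Av[OF h]] gh by simp
    qed
    let ?x = "comp (sp g \<union> sp h) v"
    have S: "sp g \<union> sp h \<subseteq> S" using supp_S by blast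
    have sx: "sp ?x = sp g \<union> sp h" using join g h by blast
    have xv: "le ?x v" using comp_le[OF S vc] .
    have xA: "?x \<in> ?A" using inA[OF S] sx le_supp[OF Au[OF g]] by blast
    have cov: "covers_in ?A le y ?x" if y: "y \<in> ?A" and sy: "sp ?x = insert c (sp y)" and cy: "c \<notin> sp y" for y c
      unfolding covers_in_def
    proof (intro conjI ballI impI)
      show "y \<in> ?A" "?x \<in> ?A" using y xA by auto
      show "le y ?x" using le_iff_supp[OF Av[OF y] xv] sy by auto
      show "y \<noteq> ?x" using sy cy by auto
    next
      fix z assume z: "z \<in> ?A" and h: "le y z \<and> le z ?x"
      then have "sp y \<subseteq> sp z" "sp z \<subseteq> insert c (sp y)" using le_supp sy by auto
      then have "sp z = sp y \<or> sp z = sp ?x" using sy by (cases "c \<in> sp z") auto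
      then show "z = y \<or> z = ?x" using le_eq_supp[OF Av[OF z] Av[OF y]] le_eq_supp[OF Av[OF z] xv] by blast
    qed
    have "sp ?x = insert b (sp g)" using sx a b by auto
    moreover have "b \<notin> sp g" using a b ab by auto
    ultimately have c1: "covers_in ?A le g ?x" using cov[OF g] by blast
    have "sp ?x = insert a (sp h)" using sx a b by auto
    moreover have "a \<notin> sp h" using a b ab by auto
    ultimately have c2: "covers_in ?A le h ?x" using cov[OF h] by blast
    from c1 c2 have "covers_in ?A le g ?x" "covers_in ?A le h ?x" by simp_all
    then show ?thesis using xA by blast
  qed
  show ?thesis unfolding upper_semimodular_lattice_on_def using lat semi by blast
qed

end

theorem theorem1:
  fixes G :: "('a, 'b) monoid_scheme" and S :: "'a set"
  assumes "coxeter_system G S"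
  shows "{x \<in> carrier G. \<not> (\<exists>y\<in>carrier G. cox_le G S y x \<and> y \<noteq> x)} = {\<one>\<^bsub>G\<^esub>}
      \<and> card (supp G S \<one>\<^bsub>G\<^esub>) = 0
      \<and> (\<forall>u\<in>carrier G. \<forall>v\<in>carrier G. covers_in (carrier G) (cox_le G S) u v \<longrightarrow>
            card (supp G S v) = card (supp G S u) + 1)
      \<and> (\<forall>u\<in>carrier G. \<forall>v\<in>carrier G. cox_le G S u v \<longrightarrow>
            upper_semimodular_lattice_on {w \<in> carrier G. cox_le G S u w \<and> cox_le G S w v} (cox_le G S))"
proof -
  have "group G" using assms by (simp add: coxeter_system_def)
  then interpret coxsys G S
    using assms by (simp add: coxsys_def coxsys_axioms_def)
  show ?thesis using conj1 supp_one conj3 conj4 by simp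
qed


end
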